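(* In the network model described in the context, let $\pi$ be an admissible cyclic policy and $f_i\in\mathcal{F}$. All packets of flow $f_i$ meet their deadlines under $\pi$ if and only if, for every finite horizon $T$, \[ \max_{0\le t\le T}\ \sum_{e\in\mathcal{T}^{(i)}} Q_{i,e}^{\pi}(t)\le \lambda_i\tau_i . \]
   Context: Network model: a directed graph $G=(V,E)$; time is slotted. Each link $e$ has capacity $c_e$. Interference is described by a conflict graph on the links; $\mathcal{M}$ is the set of feasible activation sets. Flow $f_i$ has a fixed route $\mathcal{T}^{(i)}$, deterministic fluid arrival rate $\lambda_i>0$ (exactly $\lambda_i$ units arrive at the source in each slot $0\le t\le T$), and deadline $\tau_i$: a packet meets its deadline if delivered to its destination within $\tau_i$ slots of its arrival. Each link $e\in\mathcal{T}^{(i)}$ reserves a slice $w_{i,e}$ for $f_i$ with its own first-come-first-served queue, of size $Q_{i,e}(t)$ at the beginning of slot $t$ (all queues initially empty). A policy $\pi$ chooses $\mu^\pi(t)\in\mathcal{M}$ each slot; admissible policies respect interference and are work-conserving (an activated link serves $\min\{Q_{i,e}(t),w_{i,e}\}$ from each slice queue; served units join the next link's queue in the next slot or are delivered at the last link). A policy is cyclic with period $K^\pi$ if $\mu^\pi(t)=\mu^\pi(t+K^\pi)$ for all $t\ge 0$. *)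

theory Defs
  imports Complex_Main
begin

text \<open>Links are pairs of nodes of the directed graph. The feasible activation sets
  are the independent sets of the conflict graph on the links.\<close>

definition feasible_sets :: "('v \<times> 'v) set \<Rightarrow> (('v \<times> 'v) \<Rightarrow> ('v \<times> 'v) \<Rightarrow> bool) \<Rightarrow> ('v \<times> 'v) set set" where
  "feasible_sets E conflict = {S. S \<subseteq> E \<and> (\<forall>a\<in>S. \<forall>b\<in>S. \<not> conflict a b)}"

definition is_path_route :: "('v \<times> 'v) set \<Rightarrow> ('v \<times> 'v) list \<Rightarrow> bool" where
  "is_path_route E r \<longleftrightarrow> r \<noteq> [] \<and> distinct r \<and> set r \<subseteq> E \<and>
     (\<forall>k. Suc k < length r \<longrightarrow> snd (r ! k) = fst (r ! Suc k))"

definition admissible :: "('v \<times> 'v) set set \<Rightarrow> (nat \<Rightarrow> ('v \<times> 'v) set) \<Rightarrow> bool" where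
  "admissible M mu \<longleftrightarrow> (\<forall>t. mu t \<in> M)"

definition cyclic :: "(nat \<Rightarrow> 'a) \<Rightarrow> bool" where
  "cyclic mu \<longleftrightarrow> (\<exists>K>0. \<forall>t. mu (t + K) = mu t)"

text \<open>Queue state of one flow (route r, slices w, arrival rate lam) under activation
  schedule mu: entry k is the slice queue at the k-th link of the route at the
  beginning of a slot. Activated links serve min(Q, w) (work conserving); served
  units join the next queue in the next slot; the lam units arriving in slot t
  join the first queue (available from slot t+1).\<close>

definition served :: "(nat \<Rightarrow> ('v \<times> 'v) set) \<Rightarrow> ('v \<times> 'v) list \<Rightarrow> (('v \<times> 'v) \<Rightarrow> real)
    \<Rightarrow> nat \<Rightarrow> (nat \<Rightarrow> real) \<Rightarrow> nat \<Rightarrow> real" where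
  "served mu r w t q k = (if r ! k \<in> mu t then min (q k) (w (r ! k)) else 0)"

primrec qstate :: "(nat \<Rightarrow> ('v \<times> 'v) set) \<Rightarrow> ('v \<times> 'v) list \<Rightarrow> (('v \<times> 'v) \<Rightarrow> real)
    \<Rightarrow> real \<Rightarrow> nat \<Rightarrow> nat \<Rightarrow> real" where
  "qstate mu r w lam 0 = (\<lambda>k. 0)"
| "qstate mu r w lam (Suc t) =
     (\<lambda>k. qstate mu r w lam t k - served mu r w t (qstate mu r w lam t) k
          + (if k = 0 then lam else served mu r w t (qstate mu r w lam t) (k - 1)))"

definition queue :: "(nat \<Rightarrow> ('v \<times> 'v) set) \<Rightarrow> ('v \<times> 'v) list \<Rightarrow> (('v \<times> 'v) \<Rightarrow> real)
    \<Rightarrow> real \<Rightarrow> ('v \<times> 'v) \<Rightarrow> nat \<Rightarrow> real" where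
  "queue mu r w lam e t = qstate mu r w lam t (THE k. k < length r \<and> r ! k = e)"

definition delivered :: "(nat \<Rightarrow> ('v \<times> 'v) set) \<Rightarrow> ('v \<times> 'v) list \<Rightarrow> (('v \<times> 'v) \<Rightarrow> real)
    \<Rightarrow> real \<Rightarrow> nat \<Rightarrow> real" where
  "delivered mu r w lam t = (\<Sum>s<t. served mu r w s (qstate mu r w lam s) (length r - 1))"

text \<open>Fluid FCFS: the unit at cumulative arrival position x (arriving in slot t iff
  lam*t < x <= lam*(t+1)) is delivered in the first slot s with delivered(s+1) >= x.\<close>
definition all_meet_deadlines :: "(nat \<Rightarrow> ('v \<times> 'v) set) \<Rightarrow> ('v \<times> 'v) list \<Rightarrow> (('v \<times> 'v) \<Rightarrow> real)
    \<Rightarrow> real \<Rightarrow> nat \<Rightarrow> bool" where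
  "all_meet_deadlines mu r w lam tau \<longleftrightarrow>
     (\<forall>t. \<forall>x. lam * real t < x \<and> x \<le> lam * real (Suc t) \<longrightarrow>
        (\<exists>s. s \<le> t + tau \<and> x \<le> delivered mu r w lam (Suc s)))"

end

theory Submission
  imports Defs
begin

lemma qs_nonneg:
  assumes "\<forall>e\<in>set r. w e > 0" "lam > 0"
  shows "\<forall>k<length r. 0 \<le> qstate mu r w lam t k"
proof (induction t)
  case 0 then show ?case by simp
next
  case (Suc t)
  show ?case
  proof (intro allI impI)
    fix k assume k: "k < length r"
    let ?q = "qstate mu r w lam t"
    have s: "served mu r w t ?q j \<ge> 0" if "j < length r" for j
      using Suc that assms unfolding served_def by (auto simp: less_imp_le)
    have "served mu r w t ?q k \<le> ?q k" unfolding served_def using Suc k by auto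
    moreover have "0 \<le> (if k = 0 then lam else served mu r w t ?q (k - 1))"
      using s k assms by auto
    ultimately show "0 \<le> qstate mu r w lam (Suc t) k" by simp
  qed
qed

lemma qs_total:
  assumes "r \<noteq> []"
  shows "(\<Sum>k<length r. qstate mu r w lam t k) = lam * real t - delivered mu r w lam t"
proof (induction t)
  case 0 then show ?case by (simp add: delivered_def)
next
  case (Suc t)
  obtain m where m: "length r = Suc m" using assms by (cases r) auto
  let ?q = "qstate mu r w lam t"
  let ?s = "served mu r w t ?q"
  have "(\<Sum>k<length r. qstate mu r w lam (Suc t) k)
     = (\<Sum>k<length r. ?q k) - (\<Sum>k<length r. ?s k) + (\<Sum>k<length r. (if k = 0 then lam else ?s (k - 1)))"
    by (simp add: sum.distrib sum_subtractf)
  also have "(\<Sum>k<length r. (if k = 0 then lam else ?s (k - 1))) = lam + (\<Sum>k<m. ?s k)"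
    unfolding m sum.lessThan_Suc_shift by simp
  also have "(\<Sum>k<length r. ?s k) = (\<Sum>k<m. ?s k) + ?s m"
    unfolding m by simp
  finally show ?case using Suc m by (simp add: delivered_def algebra_simps)
qed

lemma del_mono:
  assumes "\<forall>e\<in>set r. w e > 0" "lam > 0" "r \<noteq> []"
  shows "a \<le> b \<Longrightarrow> delivered mu r w lam a \<le> delivered mu r w lam b"
proof (induction b rule: dec_induct)
  case base then show ?case by simp
next
  case (step n)
  have "0 \<le> served mu r w n (qstate mu r w lam n) (length r - 1)"
    using qs_nonneg[OF assms(1,2), of mu n] assms(1,3) unfolding served_def
    by (auto simp: less_imp_le)
  then show ?case using step by (simp add: delivered_def)
qed

lemma sum_queue:
  assumes "distinct r"
  shows "(\<Sum>e\<in>set r. queue mu r w lam e t) = (\<Sum>k<length r. qstate mu r w lam t k)"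
proof -
  have "set r = (nth r) ` {..<length r}" by (auto simp: set_conv_nth)
  moreover have "inj_on (nth r) {..<length r}" using assms by (intro inj_on_nth) auto
  ultimately have "(\<Sum>e\<in>set r. queue mu r w lam e t) = (\<Sum>k<length r. queue mu r w lam (r ! k) t)"
    by (simp add: sum.reindex)
  also have "\<dots> = (\<Sum>k<length r. qstate mu r w lam t k)"
  proof (rule sum.cong)
    fix k assume k: "k \<in> {..<length r}"
    have "(THE j. j < length r \<and> r ! j = r ! k) = k"
      using k assms by (auto intro!: the_equality simp: nth_eq_iff_index_eq)
    then show "queue mu r w lam (r ! k) t = qstate mu r w lam t k" by (simp add: queue_def)
  qed simp
  finally show ?thesis .
qed

lemma main:
  assumes "\<forall>e\<in>set r. w e > 0" "lam > 0" "r \<noteq> []" "distinct r"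
  shows "all_meet_deadlines mu r w lam tau \<longleftrightarrow>
    (\<forall>T::nat. Max ((\<lambda>t. \<Sum>e\<in>set r. queue mu r w lam e t) ` {0..T}) \<le> lam * real tau)"
proof -
  let ?D = "delivered mu r w lam"
  have A: "all_meet_deadlines mu r w lam tau \<longleftrightarrow> (\<forall>t. lam * real (Suc t) \<le> ?D (Suc (t + tau)))"
  proof
    assume h: "all_meet_deadlines mu r w lam tau"
    show "\<forall>t. lam * real (Suc t) \<le> ?D (Suc (t + tau))"
    proof
      fix t
      have "lam * real t < lam * real (Suc t)" using assms(2) by simp
      then obtain s where "s \<le> t + tau" "lam * real (Suc t) \<le> ?D (Suc s)"
        using h unfolding all_meet_deadlines_def by blast
      moreover have "?D (Suc s) \<le> ?D (Suc (t + tau))" using del_mono[OF assms(1-3)] \<open>s \<le> t + tau\<close> by simp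
      ultimately show "lam * real (Suc t) \<le> ?D (Suc (t + tau))" by linarith
    qed
  next
    assume h: "\<forall>t. lam * real (Suc t) \<le> ?D (Suc (t + tau))"
    show "all_meet_deadlines mu r w lam tau" unfolding all_meet_deadlines_def
    proof (intro allI impI)
      fix t x assume "lam * real t < x \<and> x \<le> lam * real (Suc t)"
      then show "\<exists>s\<le>t + tau. x \<le> ?D (Suc s)" using h[rule_format, of t] by (intro exI[of _ "t + tau"]) auto
    qed
  qed
  have B: "(\<forall>T::nat. Max ((\<lambda>t. \<Sum>e\<in>set r. queue mu r w lam e t) ` {0..T}) \<le> lam * real tau)
     \<longleftrightarrow> (\<forall>t. lam * real t - ?D t \<le> lam * real tau)"
    by (auto simp: sum_queue[OF assms(4)] qs_total[OF assms(3)]) (meson atLeastAtMost_iff le0 order_refl)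
  have C: "(\<forall>t. lam * real t - ?D t \<le> lam * real tau) \<longleftrightarrow> (\<forall>t. lam * real (Suc t) \<le> ?D (Suc (t + tau)))"
  proof
    assume h: "\<forall>t. lam * real t - ?D t \<le> lam * real tau"
    show "\<forall>t. lam * real (Suc t) \<le> ?D (Suc (t + tau))"
    proof
      fix t
      have "lam * real (Suc (t + tau)) - ?D (Suc (t + tau)) \<le> lam * real tau" using h by blast
      then show "lam * real (Suc t) \<le> ?D (Suc (t + tau))" by (simp add: algebra_simps)
    qed
  next
    assume h: "\<forall>t. lam * real (Suc t) \<le> ?D (Suc (t + tau))"
    show "\<forall>t. lam * real t - ?D t \<le> lam * real tau"
    proof
      fix t
      show "lam * real t - ?D t \<le> lam * real tau"
      proof (cases "t \<le> tau")
        case True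
        have "?D 0 \<le> ?D t" using del_mono[OF assms(1-3)] by simp
        moreover have "lam * real t \<le> lam * real tau" using True assms(2) by simp
        ultimately show ?thesis by (simp add: delivered_def)
      next
        case False
        then obtain u where u: "t = Suc (u + tau)" by (metis add_Suc less_imp_Suc_add not_le add.commute)
        have "lam * real (Suc u) \<le> ?D t" using h u by blast
        then show ?thesis using u by (simp add: algebra_simps)
      qed
    qed
  qed
  show ?thesis using A B C by simp
qed

theorem corollary2:
  fixes E :: "('v \<times> 'v) set"
    and c :: "('v \<times> 'v) \<Rightarrow> real"
    and conflict :: "('v \<times> 'v) \<Rightarrow> ('v \<times> 'v) \<Rightarrow> bool"
    and F :: "'f set"
    and route :: "'f \<Rightarrow> ('v \<times> 'v) list"
    and lam :: "'f \<Rightarrow> real"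
    and tau :: "'f \<Rightarrow> nat"
    and w :: "'f \<Rightarrow> ('v \<times> 'v) \<Rightarrow> real"
    and mu :: "nat \<Rightarrow> ('v \<times> 'v) set"
    and i :: 'f
  assumes "finite E" and "finite F"
    and "\<forall>j\<in>F. is_path_route E (route j)"
    and "\<forall>j\<in>F. lam j > 0"
    and "\<forall>j\<in>F. \<forall>e\<in>set (route j). w j e > 0"
    and "\<forall>e\<in>E. (\<Sum>j\<in>{j\<in>F. e \<in> set (route j)}. w j e) \<le> c e"
    and "admissible (feasible_sets E conflict) mu"
    and "cyclic mu"
    and "i \<in> F"
  shows "all_meet_deadlines mu (route i) (w i) (lam i) (tau i) \<longleftrightarrow>
    (\<forall>T::nat. Max ((\<lambda>t. \<Sum>e\<in>set (route i). queue mu (route i) (w i) (lam i) e t) ` {0..T})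
               \<le> lam i * real (tau i))"
  using main[of "route i" "w i" "lam i" mu "tau i"] assms(3,4,5,9)
  unfolding is_path_route_def by auto

end
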